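(* Let $t$ be a positive integer. Fix complex numbers $\alpha,\beta$ with $\alpha^4=1+i\sqrt t$ and $\beta^4=-1+i\sqrt t$, and put $\gamma=\alpha\beta$ (so $\gamma^4=-t-1$). For integers $x,y$ let $\xi(x,y)=\sqrt2\,\alpha\,(x-i\sqrt t\,y)$ and $\eta(x,y)=\sqrt2\,\beta\,(x+i\sqrt t\,y)$. If $(x_1,y_1)$ and $(x_2,y_2)$ are two pairs of rational integers, then $$\frac{\xi(x_1,y_1)\,\eta(x_2,y_2)}{\gamma},\qquad \xi(x_1,y_1)^3\,\xi(x_2,y_2),\qquad \eta(x_1,y_1)^3\,\eta(x_2,y_2)$$ are algebraic integers lying in $\mathbb{Q}(\sqrt{-t})$.
   Context: $\sqrt{-t}=i\sqrt t$. The quantity $\gamma$ plays the role of the fourth root $(-t-1)^{1/4}$ chosen compatibly with $\alpha,\beta$. *)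

theory Defs
  imports Complex_Main "HOL-Computational_Algebra.Polynomial"
begin

definition in_Q_sqrt_neg :: "nat \<Rightarrow> complex \<Rightarrow> bool" where
  "in_Q_sqrt_neg t z \<longleftrightarrow>
     (\<exists>a b :: rat. z = of_rat a + of_rat b * \<i> * complex_of_real (sqrt (real t)))"

definition xi :: "nat \<Rightarrow> complex \<Rightarrow> int \<Rightarrow> int \<Rightarrow> complex" where
  "xi t \<alpha> x y = complex_of_real (sqrt 2) * \<alpha> *
     (of_int x - \<i> * complex_of_real (sqrt (real t)) * of_int y)"

definition eta :: "nat \<Rightarrow> complex \<Rightarrow> int \<Rightarrow> int \<Rightarrow> complex" where
  "eta t \<beta> x y = complex_of_real (sqrt 2) * \<beta> *
     (of_int x + \<i> * complex_of_real (sqrt (real t)) * of_int y)"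

end

theory Submission
  imports Defs
begin

definition RR :: "nat \<Rightarrow> complex \<Rightarrow> bool" where
  "RR t z \<longleftrightarrow> (\<exists>a b :: int. z = of_int a + of_int b * (\<i> * complex_of_real (sqrt (real t))))"

lemma w_sq: "(\<i> * complex_of_real (sqrt (real t))) * (\<i> * complex_of_real (sqrt (real t))) = - of_nat t"
proof -
  have "sqrt (real t) * sqrt (real t) = real t" by simp
  hence "complex_of_real (sqrt (real t)) * complex_of_real (sqrt (real t)) = of_nat t"
    by (simp flip: of_real_mult)
  thus ?thesis by (simp add: algebra_simps)
qed

lemma gen_m: "((a::complex) + b*w)*(c+d*w) = a*c + b*d*(w*w) + (a*d+b*c)*w"
  by (simp add: algebra_simps)
lemma gen_a: "((a::complex) + b*w)+(c+d*w) = (a+c) + (b+d)*w"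
  by (simp add: algebra_simps)

lemma RR_mult: assumes "RR t z" "RR t u" shows "RR t (z * u)"
proof -
  let ?w = "\<i> * complex_of_real (sqrt (real t))"
  obtain a b c d :: int where z: "z = of_int a + of_int b * ?w" and u: "u = of_int c + of_int d * ?w"
    using assms unfolding RR_def by blast
  have "z * u = of_int a * of_int c + of_int b * of_int d * (?w * ?w) + (of_int a * of_int d + of_int b * of_int c) * ?w"
    unfolding z u by (rule gen_m)
  also have "\<dots> = of_int (a*c - int t * b * d) + of_int (a*d+b*c) * ?w"
    unfolding w_sq by (simp add: algebra_simps)
  finally show ?thesis unfolding RR_def by blast
qed

lemma RR_add: assumes "RR t z" "RR t u" shows "RR t (z + u)"
proof -
  let ?w = "\<i> * complex_of_real (sqrt (real t))"
  obtain a b c d :: int where z: "z = of_int a + of_int b * ?w" and u: "u = of_int c + of_int d * ?w"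
    using assms unfolding RR_def by blast
  have "z + u = of_int (a + c) + of_int (b + d) * ?w"
    unfolding z u by (simp add: gen_a)
  thus ?thesis unfolding RR_def by blast
qed

lemma RR_int: "RR t (of_int a)"
  unfolding RR_def by (rule exI[of _ a], rule exI[of _ 0]) simp

lemma RR_w: "RR t (\<i> * complex_of_real (sqrt (real t)))"
  unfolding RR_def by (rule exI[of _ 0], rule exI[of _ 1]) simp

lemma RR_minus: assumes "RR t z" shows "RR t (- z)"
proof -
  have "- z = of_int (-1) * z" by simp
  thus ?thesis using RR_mult[OF RR_int assms] by metis
qed

lemma RR_diff: "RR t z \<Longrightarrow> RR t u \<Longrightarrow> RR t (z - u)"
  using RR_add[of t z "-u"] RR_minus[of t u] by simp

lemma RR_in_Q: assumes "RR t z" shows "in_Q_sqrt_neg t z"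
proof -
  obtain a b :: int where z: "z = of_int a + of_int b * (\<i> * complex_of_real (sqrt (real t)))"
    using assms unfolding RR_def by blast
  show ?thesis unfolding in_Q_sqrt_neg_def
    by (rule exI[of _ "of_int a"], rule exI[of _ "of_int b"]) (simp add: z mult.assoc)
qed

lemma gen_q: "(A::complex) + (a + b*w)*(-2*a + (a+b*w)) = A - a*a + b*b*(w*w)"
  by (simp add: algebra_simps)

lemma RR_alg: assumes "RR t z" shows "algebraic_int z"
proof -
  let ?w = "\<i> * complex_of_real (sqrt (real t))"
  obtain a b :: int where z: "z = of_int a + of_int b * ?w"
    using assms unfolding RR_def by blast
  let ?p = "[:of_int (a^2 + int t * b^2), of_int (-2*a), 1:] :: complex poly"
  show ?thesis
  proof
    have "poly ?p z = of_int (a^2 + int t * b^2) + z * (of_int (-2*a) + z)" by simp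
    also have "\<dots> = of_int (a^2 + int t * b^2) - of_int a * of_int a + of_int b * of_int b * (?w * ?w)"
      unfolding z by (simp only: of_int_mult of_int_minus of_int_numeral gen_q)
    also have "\<dots> = 0" unfolding w_sq by (simp add: power2_eq_square)
    finally show "poly ?p z = 0" .
    show "lead_coeff ?p = 1" by simp
    show "\<forall>i. coeff ?p i \<in> \<int>" by (auto simp: coeff_pCons split: nat.splits)
  qed
qed

lemma gen1: "a \<noteq> 0 \<Longrightarrow> b \<noteq> 0 \<Longrightarrow> (r*a*X)*(r*b*Y)/(a*b) = (r*r)*(X*Y::complex)"
  by simp
lemma gen2: "(r*a*X)^3*(r*a*Y) = (r*r)*(r*r)*a^4*(X^3*Y::complex)"
  by (simp add: eval_nat_numeral mult_ac)
lemma r2l: "complex_of_real (sqrt 2) * complex_of_real (sqrt 2) = 2"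
proof -
  have "sqrt 2 * sqrt 2 = (2::real)" by simp
  thus ?thesis by (simp flip: of_real_mult)
qed
theorem lemma3p3:
  fixes t :: nat and \<alpha> \<beta> \<gamma> :: complex and x1 y1 x2 y2 :: int
  assumes "t > 0"
    and "\<alpha> ^ 4 = 1 + \<i> * complex_of_real (sqrt (real t))"
    and "\<beta> ^ 4 = -1 + \<i> * complex_of_real (sqrt (real t))"
    and "\<gamma> = \<alpha> * \<beta>"
  shows "algebraic_int (xi t \<alpha> x1 y1 * eta t \<beta> x2 y2 / \<gamma>) \<and>
           in_Q_sqrt_neg t (xi t \<alpha> x1 y1 * eta t \<beta> x2 y2 / \<gamma>) \<and>
         algebraic_int (xi t \<alpha> x1 y1 ^ 3 * xi t \<alpha> x2 y2) \<and>
           in_Q_sqrt_neg t (xi t \<alpha> x1 y1 ^ 3 * xi t \<alpha> x2 y2) \<and>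
         algebraic_int (eta t \<beta> x1 y1 ^ 3 * eta t \<beta> x2 y2) \<and>
           in_Q_sqrt_neg t (eta t \<beta> x1 y1 ^ 3 * eta t \<beta> x2 y2)"
proof -
  define w where "w = \<i> * complex_of_real (sqrt (real t))"
  define r where "r = complex_of_real (sqrt 2)"
  have r2: "r * r = 2" unfolding r_def by (rule r2l)
  have a0: "\<alpha> \<noteq> 0" using assms(2) by (auto simp: complex_eq_iff)
  have b0: "\<beta> \<noteq> 0" using assms(3) by (auto simp: complex_eq_iff)
  have Rw: "RR t w" using RR_w unfolding w_def .
  have RI: "RR t (of_int k)" for k using RR_int .
  have e1: "xi t \<alpha> x1 y1 * eta t \<beta> x2 y2 / \<gamma> = (r*r) * ((of_int x1 - w * of_int y1) * (of_int x2 + w * of_int y2))"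
    unfolding xi_def eta_def assms(4) w_def[symmetric] r_def[symmetric] using a0 b0
    by (rule gen1)
  have e2: "xi t \<alpha> x1 y1 ^ 3 * xi t \<alpha> x2 y2 = (r*r)*(r*r) * \<alpha>^4 * ((of_int x1 - w * of_int y1)^3 * (of_int x2 - w * of_int y2))"
    unfolding xi_def w_def[symmetric] r_def[symmetric] by (rule gen2)
  have e3: "eta t \<beta> x1 y1 ^ 3 * eta t \<beta> x2 y2 = (r*r)*(r*r) * \<beta>^4 * ((of_int x1 + w * of_int y1)^3 * (of_int x2 + w * of_int y2))"
    unfolding eta_def w_def[symmetric] r_def[symmetric] by (rule gen2)
  have R2: "RR t 2" using RI[of 2] by simp
  have R1: "RR t 1" using RI[of 1] by simp
  have Rpow: "RR t z \<Longrightarrow> RR t (z^3)" for z by (simp add: eval_nat_numeral RR_mult)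
  have E1: "RR t (xi t \<alpha> x1 y1 * eta t \<beta> x2 y2 / \<gamma>)"
    unfolding e1 r2 by (intro RR_mult RR_add RR_diff R2 Rw RI)
  have E2: "RR t (xi t \<alpha> x1 y1 ^ 3 * xi t \<alpha> x2 y2)"
    unfolding e2 r2 assms(2) w_def[symmetric] by (intro RR_mult RR_add RR_diff R2 Rw RI R1 Rpow)
  have E3: "RR t (eta t \<beta> x1 y1 ^ 3 * eta t \<beta> x2 y2)"
    unfolding e3 r2 assms(3) w_def[symmetric] by (intro RR_mult RR_add RR_diff RR_minus R2 Rw RI R1 Rpow)
  show ?thesis using E1 E2 E3 RR_alg RR_in_Q by blast
qed

end
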